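(* Assume $b<0$ and $a>0$, and let $(J,E)\in D_1$, with $q\in(0,\sqrt{a/3})$ such that $J=q(q^2-a)/b$. Then $$\lim_{E\to E_+(J)}T(J,E)=+\infty,\quad \lim_{E\to E_+(J)}\tilde M(J,E)=+\infty,\quad \lim_{E\to E_+(J)}\frac{\tilde M(J,E)}{T(J,E)}=\frac{q^2-a}{2b},$$ $$\lim_{E\to E_+(J)}\tilde P(J,E)=+\infty,\quad \lim_{E\to E_+(J)}\frac{\tilde P(J,E)}{T(J,E)}=\frac{q(q^2-a)}{2b}.$$
   Context: Consider the ODE $u_{xx}+au+b|u|^2u=0$ with $b<0<a$, and the quantities $J=\operatorname{Im}(u\bar u_x)$, $E=\frac12|u_x|^2+\frac a2|u|^2+\frac b4|u|^4$. Let $V_J(r)=\frac{J^2}{2r^2}+a\frac{r^2}{2}+b\frac{r^4}{4}$. For $0<J<\sqrt{\frac{4a^3}{27b^2}}$ write $J=q(q^2-a)/b=Q(Q^2-a)/b$ with $0<q^2<a/3<Q^2<a$, $q,Q>0$; set $E_-(J)=\frac1{4b}(Q^2-a)(3Q^2+a)$ and $E_+(J)=\frac1{4b}(q^2-a)(3q^2+a)$ (local minimum and maximum values of $V_J$). Let $D_1=\{(J,E):0<J<\sqrt{\frac{4a^3}{27b^2}},\ E_-(J)<E<E_+(J)\}$. For $(J,E)\in D_1$, let $r_1<r_2<r_3$ be the positive roots of $E-V_J(r)$ and define $T(J,E)=2\int_{r_1}^{r_2}\frac{dr}{\sqrt{2(E-V_J(r))}}$, $\tilde M(J,E)=\int_{r_1}^{r_2}\frac{r^2\,dr}{\sqrt{2(E-V_J(r))}}$,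 and $\tilde P(J,E)=\frac12 J\,T(J,E)$. *)

theory Defs
  imports "HOL-Analysis.Analysis"
begin

definition VJ :: "real \<Rightarrow> real \<Rightarrow> real \<Rightarrow> real \<Rightarrow> real" where
  "VJ a b J r = J^2 / (2 * r^2) + a * r^2 / 2 + b * r^4 / 4"

definition small_q :: "real \<Rightarrow> real \<Rightarrow> real \<Rightarrow> real" where
  "small_q a b J = (THE q. 0 < q \<and> q^2 < a/3 \<and> J = q * (q^2 - a) / b)"

definition big_Q :: "real \<Rightarrow> real \<Rightarrow> real \<Rightarrow> real" where
  "big_Q a b J = (THE Q. 0 < Q \<and> a/3 < Q^2 \<and> Q^2 < a \<and> J = Q * (Q^2 - a) / b)"

definition Eminus :: "real \<Rightarrow> real \<Rightarrow> real \<Rightarrow> real" where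
  "Eminus a b J = (let Q = big_Q a b J in (Q^2 - a) * (3 * Q^2 + a) / (4 * b))"

definition Eplus :: "real \<Rightarrow> real \<Rightarrow> real \<Rightarrow> real" where
  "Eplus a b J = (let q = small_q a b J in (q^2 - a) * (3 * q^2 + a) / (4 * b))"

definition D1 :: "real \<Rightarrow> real \<Rightarrow> (real \<times> real) set" where
  "D1 a b = {(J, E). 0 < J \<and> J < sqrt (4 * a^3 / (27 * b^2)) \<and>
                     Eminus a b J < E \<and> E < Eplus a b J}"

definition roots :: "real \<Rightarrow> real \<Rightarrow> real \<Rightarrow> real \<Rightarrow> real list" where
  "roots a b J E = sorted_list_of_set {r. 0 < r \<and> E - VJ a b J r = 0}"

definition r1 :: "real \<Rightarrow> real \<Rightarrow> real \<Rightarrow> real \<Rightarrow> real" where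
  "r1 a b J E = roots a b J E ! 0"

definition r2 :: "real \<Rightarrow> real \<Rightarrow> real \<Rightarrow> real \<Rightarrow> real" where
  "r2 a b J E = roots a b J E ! 1"

definition T :: "real \<Rightarrow> real \<Rightarrow> real \<Rightarrow> real \<Rightarrow> real" where
  "T a b J E = 2 * integral {r1 a b J E .. r2 a b J E}
                  (\<lambda>r. 1 / sqrt (2 * (E - VJ a b J r)))"

definition Mt :: "real \<Rightarrow> real \<Rightarrow> real \<Rightarrow> real \<Rightarrow> real" where
  "Mt a b J E = integral {r1 a b J E .. r2 a b J E}
                  (\<lambda>r. r^2 / sqrt (2 * (E - VJ a b J r)))"

definition Pt :: "real \<Rightarrow> real \<Rightarrow> real \<Rightarrow> real \<Rightarrow> real" where
  "Pt a b J E = J * T a b J E / 2"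

end

theory Submission
  imports Defs
begin

lemma sqrt_lt_sq: "0 \<le> x \<Longrightarrow> sqrt x < (r::real) \<Longrightarrow> x < r^2"
  by (smt (verit) real_sqrt_abs real_sqrt_less_iff)
lemma lt_sqrt_sq: "0 \<le> (r::real) \<Longrightarrow> r < sqrt x \<Longrightarrow> r^2 < x"
  by (smt (verit) real_sqrt_abs real_sqrt_less_iff)
lemma sqrt_le_sq: "0 \<le> x \<Longrightarrow> sqrt x \<le> (r::real) \<Longrightarrow> x \<le> r^2"
  by (smt (verit) real_sqrt_abs real_sqrt_le_iff)
lemma le_sqrt_sq: "0 \<le> (r::real) \<Longrightarrow> r \<le> sqrt x \<Longrightarrow> r^2 \<le> x"
  by (smt (verit) real_sqrt_abs real_sqrt_le_iff)


lemma small_q_eq: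
  fixes a b J q :: real
  assumes "b < 0" "0 < a" "0 < q" "q^2 < a/3" "J = q * (q^2 - a) / b"
  shows "small_q a b J = q"
  unfolding small_q_def
proof (rule the_equality)
  show "0 < q \<and> q\<^sup>2 < a / 3 \<and> J = q * (q\<^sup>2 - a) / b" using assms by auto
next
  fix p assume p: "0 < p \<and> p\<^sup>2 < a / 3 \<and> J = p * (p\<^sup>2 - a) / b"
  then have "p * (p\<^sup>2 - a) = q * (q\<^sup>2 - a)" using assms by (simp add: field_simps)
  then have "(p - q) * (p^2 + p*q + q^2 - a) = 0" by (simp add: algebra_simps power2_eq_square power3_eq_cube)
  moreover have "p*q < a/3"
  proof -
    have "0 \<le> (p-q)^2" by simp
    then have "2*p*q \<le> p^2+q^2" by (simp add: power2_eq_square algebra_simps)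
    then show ?thesis using assms p by linarith
  qed
  ultimately show "p = q" using p assms by auto
qed

lemma Eplus_eq:
  fixes a b J q :: real
  assumes "b < 0" "0 < a" "0 < q" "q^2 < a/3" "J = q * (q^2 - a) / b"
  shows "Eplus a b J = (q^2 - a) * (3 * q^2 + a) / (4 * b)"
  using small_q_eq[OF assms] by (simp add: Eplus_def)

lemma VJ_poly:
  fixes r :: real assumes "r \<noteq> 0"
  shows "4 * r^2 * (E - VJ a b J r) = - b * (r^2)^3 - 2 * a * (r^2)^2 + 4 * E * r^2 - 2 * J^2"
  using assms by (simp add: VJ_def field_simps)

lemma P_decomp:
  fixes a b J q s E :: real
  assumes "b < 0" "J = q * (q^2 - a) / b"
  shows "- b * s^3 - 2 * a * s^2 + 4 * E * s - 2 * J^2 =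
     - b * (s - (q^2-a)/b)^2 * (s - (-2*q^2/b)) - 4 * ((q^2 - a) * (3 * q^2 + a) / (4 * b) - E) * s"
  using assms(1) unfolding assms(2) by (simp add: field_simps eval_nat_numeral)


lemma cubic_factor:
  fixes a b E J s1 s2 s :: real
  assumes "b \<noteq> 0" "s1 \<noteq> s2"
    and P1: "- b * s1^3 - 2 * a * s1^2 + 4 * E * s1 - 2 * J^2 = 0"
    and P2: "- b * s2^3 - 2 * a * s2^2 + 4 * E * s2 - 2 * J^2 = 0"
  shows "- b * s^3 - 2 * a * s^2 + 4 * E * s - 2 * J^2 = - b * (s - s1) * (s - s2) * (s - (-2*a/b - s1 - s2))"
proof -
  define Q where "Q x = - b * (x^2 + x * s1 + s1^2) - 2*a*(x + s1) + 4*E" for x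
  have PQ: "- b * x^3 - 2 * a * x^2 + 4 * E * x - 2 * J^2 = (x - s1) * Q x" for x
    using P1 unfolding Q_def by (simp add: algebra_simps power2_eq_square power3_eq_cube)
  have "Q s2 = 0" using PQ[of s2] P2 assms(2) by simp
  have "Q x = (x - s2) * (- b * (x + s1 + s2) - 2 * a)" for x
    using \<open>Q s2 = 0\<close> unfolding Q_def by (simp add: algebra_simps power2_eq_square)
  moreover have "- b * (s - (-2*a/b - s1 - s2)) = - b * (s + s1 + s2) - 2 * a"
    using assms(1) by (simp add: field_simps)
  ultimately show ?thesis using PQ[of s]
    by (metis (no_types, lifting) mult.assoc mult.commute)
qed


lemma roots_structure:
  fixes a b J q E s0 \<sigma> sm hh Ep :: real
  assumes b: "b < 0" and a: "0 < a" and q: "0 < q" "q^2 < a/3" and J: "J = q * (q^2 - a) / b"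
  defines "s0 \<equiv> (q^2 - a) / b" and "\<sigma> \<equiv> -2 * q^2 / b" and "sm \<equiv> (s0 + \<sigma>)/2"
    and "hh \<equiv> (s0 - \<sigma>)/2" and "Ep \<equiv> (q^2 - a) * (3 * q^2 + a) / (4 * b)"
  assumes E: "E < Ep" and Esmall: "(Ep - E) * 4 * sm < - b * hh^3"
  shows "\<exists>s1 s2 s3. \<sigma> < s1 \<and> s1 < sm \<and> sm < s2 \<and> s2 < s0 \<and> s0 < s3 \<and>
     (s0 - s2)^2 * (- b * hh) \<le> 4 * (Ep - E) * s0 \<and>
     r1 a b J E = sqrt s1 \<and> r2 a b J E = sqrt s2 \<and>
     (\<forall>r>0. 2 * (E - VJ a b J r) = - b * (r^2 - s1) * (s2 - r^2) * (s3 - r^2) / (2 * r^2))"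
proof -
  define P where "P s = - b * s^3 - 2 * a * s^2 + 4 * E * s - 2 * J^2" for s
  define \<delta> where "\<delta> = Ep - E"
  have \<delta>: "0 < \<delta>" using E by (simp add: \<delta>_def)
  have Pd: "P s = - b * (s - s0)^2 * (s - \<sigma>) - 4 * \<delta> * s" for s
    unfolding P_def P_decomp[OF b J] s0_def \<sigma>_def \<delta>_def Ep_def by simp
  have s0pos: "0 < s0" using b q a unfolding s0_def by (simp add: divide_neg_neg)
  have \<sigma>pos: "0 < \<sigma>" using b q unfolding \<sigma>_def by (simp add: divide_pos_neg)
  have \<sigma>s0: "\<sigma> < s0" using b q unfolding \<sigma>_def s0_def by (simp add: field_simps)
  have hh: "0 < hh" using \<sigma>s0 by (simp add: hh_def)
  have smv: "\<sigma> < sm" "sm < s0" "sm - \<sigma> = hh" "s0 - sm = hh" using \<sigma>s0 unfolding sm_def hh_def by (auto simp: field_simps)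
  have contP: "continuous_on S P" for S unfolding P_def by (intro continuous_intros)
  have Psig: "P \<sigma> < 0" using Pd[of \<sigma>] \<delta> \<sigma>pos by simp
  have Ps0: "P s0 < 0" using Pd[of s0] \<delta> s0pos by simp
  have Psm: "P sm > 0"
  proof -
    have "P sm = - b * hh^3 - 4 * \<delta> * sm" using Pd[of sm] smv
      by (simp add: power2_eq_square power3_eq_cube algebra_simps)
    then show ?thesis using Esmall unfolding \<delta>_def by (simp add: algebra_simps)
  qed
  obtain s1 where s1: "\<sigma> \<le> s1" "s1 \<le> sm" "P s1 = 0"
    using IVT'[of P \<sigma> 0 sm, OF _ _ _ contP] Psig Psm smv by force
  obtain s2 where s2: "sm \<le> s2" "s2 \<le> s0" "P s2 = 0"
    using IVT2'[of P s0 0 sm, OF _ _ _ contP] Ps0 Psm smv by force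
  have s1': "\<sigma> < s1" "s1 < sm" using s1 Psig Psm by (auto simp: le_less)
  have s2': "sm < s2" "s2 < s0" using s2 Ps0 Psm by (auto simp: le_less)
  define s3 where "s3 = -2*a/b - s1 - s2"
  have fac: "P s = - b * (s - s1) * (s - s2) * (s - s3)" for s
    using cubic_factor[of b s1 s2 a E J s] s1 s2 s1' s2' b unfolding P_def s3_def by auto
  have s3: "s0 < s3"
  proof (rule ccontr)
    assume "\<not> s0 < s3"
    then have "0 \<le> - b * (s0 - s1) * (s0 - s2) * (s0 - s3)"
      using b s1' s2' smv by (intro mult_nonneg_nonneg) auto
    then show False using fac[of s0] Ps0 by simp
  qed
  have bound: "(s0 - s2)^2 * (- b * hh) \<le> 4 * (Ep - E) * s0"
  proof -
    have "- b * (s2 - s0)^2 * (s2 - \<sigma>) = 4 * \<delta> * s2" using Pd[of s2] s2 by simp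
    moreover have "(s0 - s2)^2 * (- b * hh) \<le> - b * (s2 - s0)^2 * (s2 - \<sigma>)"
    proof -
      have nn: "0 \<le> (s0 - s2)^2 * (- b)" using b by (simp add: mult_nonneg_nonpos)
      have "hh \<le> s2 - \<sigma>" using s2' smv by simp
      then have "(s0 - s2)^2 * (- b) * hh \<le> (s0 - s2)^2 * (- b) * (s2 - \<sigma>)"
        using nn by (rule mult_left_mono)
      then show ?thesis by (simp add: power2_commute algebra_simps)
    qed
    moreover have "4 * \<delta> * s2 \<le> 4 * \<delta> * s0" using \<delta> s2' by simp
    ultimately show ?thesis unfolding \<delta>_def by linarith
  qed
  have pos: "0 < s1" "0 < s2" "0 < s3" using s1' s2' s3 \<sigma>pos smv by auto
  have VP: "2 * (E - VJ a b J r) = P (r^2) / (2 * r^2)" if "r \<noteq> 0" for r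
    using VJ_poly[OF that, of E a b J] that unfolding P_def by (simp add: field_simps)
  have rootset: "{r. 0 < r \<and> E - VJ a b J r = 0} = {sqrt s1, sqrt s2, sqrt s3}"
  proof (intro set_eqI iffI)
    fix r assume "r \<in> {r. 0 < r \<and> E - VJ a b J r = 0}"
    then have r: "0 < r" "E - VJ a b J r = 0" by auto
    then have "P (r^2) = 0" using VP[of r] by simp
    then have "r^2 = s1 \<or> r^2 = s2 \<or> r^2 = s3" using fac[of "r^2"] b by simp
    then show "r \<in> {sqrt s1, sqrt s2, sqrt s3}" using r(1) by auto
  next
    fix r assume "r \<in> {sqrt s1, sqrt s2, sqrt s3}"
    then have r: "0 < r" "r^2 = s1 \<or> r^2 = s2 \<or> r^2 = s3" using pos by auto
    then have "P (r^2) = 0" using fac[of "r^2"] by auto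
    then show "r \<in> {r. 0 < r \<and> E - VJ a b J r = 0}" using VP[of r] r(1) by simp
  qed
  have ord: "sqrt s1 < sqrt s2" "sqrt s2 < sqrt s3" using s1' s2' s3 smv by auto
  have "sorted_list_of_set {sqrt s1, sqrt s2, sqrt s3} = [sqrt s1, sqrt s2, sqrt s3]"
    by (rule sorted_list_of_set_unique[THEN iffD1]) (use ord in auto)
  then have rr: "r1 a b J E = sqrt s1" "r2 a b J E = sqrt s2"
    unfolding r1_def r2_def roots_def rootset by auto
  have fac2: "\<forall>r>0. 2 * (E - VJ a b J r) = - b * (r^2 - s1) * (s2 - r^2) * (s3 - r^2) / (2 * r^2)"
  proof (intro allI impI)
    fix r :: real assume "0 < r"
    then show "2 * (E - VJ a b J r) = - b * (r^2 - s1) * (s2 - r^2) * (s3 - r^2) / (2 * r^2)"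
      using VP[of r] fac[of "r^2"] by (simp add: algebra_simps)
  qed
  show ?thesis using s1' s2' s3 bound rr fac2 by blast
qed


lemma arcsin_majorant_integrable:
  fixes s1 s2 :: real
  assumes "0 < s1" "s1 < s2"
  shows "(\<lambda>r. r / sqrt ((r^2 - s1) * (s2 - r^2))) integrable_on {sqrt s1..sqrt s2}"
proof -
  define u where "u r = (2 * r^2 - s1 - s2) / (s2 - s1)" for r
  define g where "g r = r / sqrt ((r^2 - s1) * (s2 - r^2))" for r
  have d: "s2 - s1 > 0" using assms by simp
  have der: "((\<lambda>r. arcsin (u r)) has_real_derivative (2 * g r)) (at r)"
    if r: "r \<in> {sqrt s1<..<sqrt s2}" for r
  proof -
    have "0 < sqrt s1" using assms by simp
    moreover have "sqrt s1 < r" using r by simp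
    ultimately have r0: "0 < r" by linarith
    have rs: "s1 < r^2" "r^2 < s2"
      using r r0 assms sqrt_lt_sq[of s1 r] lt_sqrt_sq[of r s2] by auto
    define X where "X = (r^2 - s1) * (s2 - r^2)"
    have X: "0 < X" using rs by (simp add: X_def)
    have du: "(u has_real_derivative (4 * r / (s2 - s1))) (at r)"
      proof -
      have "((\<lambda>r. 2 * r^2 - s1 - s2) has_real_derivative (4 * r)) (at r)"
        by (auto intro!: derivative_eq_intros)
      from DERIV_cdivide[OF this, of "s2 - s1"] show ?thesis unfolding u_def .
    qed
    have e: "(s2 - s1)^2 - (2 * r^2 - s1 - s2)^2 = 4 * X" unfolding X_def by algebra
    have u1: "1 - (u r)^2 = 4 * X / (s2 - s1)^2"
    proof -
      have "1 - (u r)^2 = ((s2 - s1)^2 - (2 * r^2 - s1 - s2)^2) / (s2 - s1)^2"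
      proof -
        have "(u r)^2 = (2 * r^2 - s1 - s2)^2 / (s2 - s1)^2" by (simp add: u_def power_divide)
        moreover have "1 = (s2 - s1)^2 / (s2 - s1)^2" using d by simp
        ultimately show ?thesis by (metis diff_divide_distrib)
      qed
      then show ?thesis using e by simp
    qed
    have um: "-1 < u r" "u r < 1"
    proof -
      have "0 < 1 - (u r)^2" using u1 X d by simp
      then have "\<bar>u r\<bar> < 1" by (simp add: abs_square_less_1)
      then show "-1 < u r" "u r < 1" by auto
    qed
    have sq: "sqrt (1 - (u r)^2) = 2 * sqrt X / (s2 - s1)"
      using d X unfolding u1 by (simp add: real_sqrt_divide real_sqrt_mult)
    have "((\<lambda>r. arcsin (u r)) has_real_derivative (inverse (sqrt (1 - (u r)^2)) * (4 * r / (s2 - s1)))) (at r)"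
      using DERIV_chain2[OF DERIV_arcsin[OF um] du] .
    moreover have "inverse (sqrt (1 - (u r)^2)) * (4 * r / (s2 - s1)) = 2 * g r"
      unfolding sq g_def X_def[symmetric] using d X by (simp add: field_simps)
    ultimately show ?thesis by simp
  qed
  have cont: "continuous_on {sqrt s1..sqrt s2} (\<lambda>r. arcsin (u r))"
  proof (intro continuous_on_arcsin ballI conjI)
    show "continuous_on {sqrt s1..sqrt s2} u" unfolding u_def using d by (intro continuous_intros) auto
  next
    fix r assume r: "r \<in> {sqrt s1..sqrt s2}"
    have "0 \<le> sqrt s1" using assms by simp
    moreover have "sqrt s1 \<le> r" using r assms by simp
    ultimately have r0: "0 \<le> r" by linarith
    have rs: "s1 \<le> r^2" "r^2 \<le> s2"
      using r r0 assms sqrt_le_sq[of s1 r] le_sqrt_sq[of r s2] by auto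
    show "-1 \<le> u r" "u r \<le> 1" using rs d unfolding u_def by (auto simp: field_simps)
  qed
  have "sqrt s1 \<le> sqrt s2" using assms by simp
  have "((\<lambda>r. 2 * g r) has_integral (arcsin (u (sqrt s2)) - arcsin (u (sqrt s1)))) {sqrt s1..sqrt s2}"
    by (rule fundamental_theorem_of_calculus_interior[OF \<open>sqrt s1 \<le> sqrt s2\<close> cont])
       (use der in \<open>auto simp: has_real_derivative_iff_has_vector_derivative\<close>)
  then have "(\<lambda>r. 2 * g r) integrable_on {sqrt s1..sqrt s2}" by blast
  then have "g integrable_on {sqrt s1..sqrt s2}" by simp
  then show ?thesis unfolding g_def by simp
qed


lemma inv_sqrt_bound:
  fixes B X r s2 s3 w :: real
  assumes "0 < B" "0 < X" "0 < r" "r^2 < s2" "s2 < s3"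
    and w: "w = B * X * (s3 - r^2) / (2 * r^2)"
  shows "1 / sqrt w \<le> sqrt (2 / (B * (s3 - s2))) * (r / sqrt X)"
proof -
  have "1 / sqrt w = sqrt (2 * r^2 / (B * X * (s3 - r^2)))"
    unfolding w by (simp add: real_sqrt_divide)
  also have "\<dots> \<le> sqrt (2 * r^2 / (B * X * (s3 - s2)))"
    using assms by (intro real_sqrt_le_mono frac_le) (auto intro!: mult_left_mono mult_pos_pos)
  also have "2 * r^2 / (B * X * (s3 - s2)) = (2 / (B * (s3 - s2))) * (r^2 / X)"
    by (simp add: field_simps)
  also have "sqrt ((2 / (B * (s3 - s2))) * (r^2 / X)) = sqrt (2 / (B * (s3 - s2))) * (r / sqrt X)"
    using assms(3) by (simp add: real_sqrt_mult real_sqrt_divide)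
  finally show ?thesis .
qed

lemma weighted_integrable:
  fixes s1 s2 s3 B :: real and w h :: "real \<Rightarrow> real"
  assumes s: "0 < s1" "s1 < s2" "s2 < s3" and B: "0 < B"
    and wdef: "\<forall>r>0. w r = B * (r^2 - s1) * (s2 - r^2) * (s3 - r^2) / (2 * r^2)"
    and hc: "continuous_on {sqrt s1..sqrt s2} h"
  shows "(\<lambda>r. h r / sqrt (w r)) integrable_on {sqrt s1..sqrt s2}"
proof -
  define g where "g r = r / sqrt ((r^2 - s1) * (s2 - r^2))" for r
  define C where "C = sqrt (2 / (B * (s3 - s2)))"
  obtain M where M: "\<forall>x\<in>{sqrt s1..sqrt s2}. norm (h x) \<le> M"
    using compact_continuous_image[OF hc compact_Icc] by (metis bounded_iff compact_imp_bounded imageI)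
  have ioo: "0 < r" "s1 < r^2" "r^2 < s2" if r: "r \<in> {sqrt s1<..<sqrt s2}" for r
  proof -
    have "0 < sqrt s1" using s by simp
    moreover have "sqrt s1 < r" using r by simp
    ultimately show r0: "0 < r" by linarith
    show "s1 < r^2" "r^2 < s2"
      using r r0 s sqrt_lt_sq[of s1 r] lt_sqrt_sq[of r s2] by auto
  qed
  have gint: "g integrable_on {sqrt s1<..<sqrt s2}"
    using arcsin_majorant_integrable[OF s(1,2)] integrable_on_Icc_iff_Ioo unfolding g_def by blast
  then have gint': "(\<lambda>r. M * C * g r) integrable_on {sqrt s1<..<sqrt s2}"
    using integrable_on_cmult_left[OF gint, of "M * C"] by simp
  define W where "W r = B * (r^2 - s1) * (s2 - r^2) * (s3 - r^2) / (2 * r^2)" for r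
  have Wpos: "0 < W r" if "r \<in> {sqrt s1<..<sqrt s2}" for r
    using ioo[OF that] s B unfolding W_def by (intro divide_pos_pos mult_pos_pos) auto
  have cont: "continuous_on {sqrt s1<..<sqrt s2} (\<lambda>r. h r / sqrt (w r))"
  proof -
    have "continuous_on {sqrt s1<..<sqrt s2} (\<lambda>r. h r / sqrt (W r))"
      unfolding W_def
    proof (intro continuous_intros ballI)
      show "continuous_on {sqrt s1<..<sqrt s2} h"
        by (rule continuous_on_subset[OF hc]) auto
    next
      fix x assume x: "x \<in> {sqrt s1<..<sqrt s2}"
      show "2 * x\<^sup>2 \<noteq> 0" using ioo(1)[OF x] by simp
      show "sqrt (B * (x\<^sup>2 - s1) * (s2 - x\<^sup>2) * (s3 - x\<^sup>2) / (2 * x\<^sup>2)) \<noteq> 0"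
        using Wpos[OF x] unfolding W_def by (metis less_irrefl real_sqrt_eq_zero_cancel_iff)
    qed
    moreover have "W r = w r" if "r \<in> {sqrt s1<..<sqrt s2}" for r
      using wdef ioo[OF that] unfolding W_def by auto
    ultimately show ?thesis by (metis (no_types, lifting) continuous_on_cong)
  qed
  have meas: "(\<lambda>r. h r / sqrt (w r)) \<in> borel_measurable (lebesgue_on {sqrt s1<..<sqrt s2})"
    by (rule continuous_imp_measurable_on_sets_lebesgue[OF cont]) simp
  have bound: "norm (h r / sqrt (w r)) \<le> M * C * g r" if r: "r \<in> {sqrt s1<..<sqrt s2}" for r
  proof -
    have wr: "w r = B * ((r^2 - s1) * (s2 - r^2)) * (s3 - r^2) / (2 * r^2)"
      using wdef ioo[OF r] by (simp add: mult.assoc)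
    have X: "0 < (r^2 - s1) * (s2 - r^2)" using ioo[OF r] by simp
    have i: "1 / sqrt (w r) \<le> C * g r"
      unfolding C_def g_def by (rule inv_sqrt_bound[OF B X ioo(1)[OF r] ioo(3)[OF r] s(3) wr])
    have wp: "0 < w r" using Wpos[OF r] wdef ioo[OF r] unfolding W_def by auto
    have hM: "\<bar>h r\<bar> \<le> M" using M r by auto
    have "norm (h r / sqrt (w r)) = \<bar>h r\<bar> * (1 / sqrt (w r))" using wp by (simp add: abs_div)
    also have "\<dots> \<le> M * (C * g r)"
      using hM i wp by (intro mult_mono) auto
    finally show ?thesis by (simp add: mult.assoc)
  qed
  have "(\<lambda>r. h r / sqrt (w r)) integrable_on {sqrt s1<..<sqrt s2}"
    by (rule measurable_bounded_by_integrable_imp_integrable[OF meas gint' bound]) simp_all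
  then show ?thesis using integrable_on_Icc_iff_Ioo by blast
qed


lemma w_P:
  fixes a b J q E r :: real
  assumes "b < 0" "J = q * (q^2 - a) / b" "r \<noteq> 0"
  shows "2 * (E - VJ a b J r) = (- b * (r^2 - (q^2-a)/b)^2 * (r^2 - (-2*q^2/b))
      - 4 * ((q^2 - a) * (3 * q^2 + a) / (4 * b) - E) * r^2) / (2 * r^2)"
  using VJ_poly[OF assms(3), of E a b J] P_decomp[OF assms(1,2), of "r^2" E] assms(3)
  by (simp add: field_simps)

lemma w_upper:
  fixes b s0 \<sigma> sm \<delta> r rq :: real
  assumes b: "b < 0" and \<delta>: "0 \<le> \<delta>" and r: "0 < r" "sm \<le> r^2" "r^2 \<le> s0" and sm: "0 < sm" "\<sigma> \<le> sm"
    and rq: "rq = sqrt s0"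
  shows "(- b * (r^2 - s0)^2 * (r^2 - \<sigma>) - 4 * \<delta> * r^2) / (2 * r^2)
         \<le> (- 2 * b * s0 * (s0 - \<sigma>) / sm) * (rq - r)^2"
proof -
  define Y where "Y = (s0 - r^2)^2"
  have s0: "0 < s0" using r sm by linarith
  have Y0: "0 \<le> Y" by (simp add: Y_def)
  have "(- b * (r^2 - s0)^2 * (r^2 - \<sigma>) - 4 * \<delta> * r^2) / (2 * r^2) \<le> (- b * Y * (r^2 - \<sigma>)) / (2 * r^2)"
    using r \<delta> by (intro divide_right_mono) (auto simp: Y_def power2_commute)
  also have "\<dots> \<le> (- b * Y * (s0 - \<sigma>)) / (2 * sm)"
  proof (rule frac_le)
    show "0 \<le> - b * Y * (s0 - \<sigma>)" using b Y0 r sm by (intro mult_nonneg_nonneg) auto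
    show "- b * Y * (r\<^sup>2 - \<sigma>) \<le> - b * Y * (s0 - \<sigma>)"
      using b Y0 r by (intro mult_left_mono) (auto simp: mult_nonpos_nonneg)
    show "0 < 2 * sm" using sm by simp
    show "2 * sm \<le> 2 * r\<^sup>2" using r by simp
  qed
  also have "\<dots> \<le> (- b * (4 * s0 * (rq - r)^2) * (s0 - \<sigma>)) / (2 * sm)"
  proof -
    have rr: "rq * rq = s0" "0 \<le> rq" using rq s0 by auto
    have r_le: "r \<le> rq" using r rq by (metis real_le_rsqrt)
    have "s0 - r^2 = (rq - r) * (rq + r)" using rr by (simp add: power2_eq_square algebra_simps)
    then have "Y = (rq - r)^2 * (rq + r)^2" by (simp add: Y_def power_mult_distrib)
    also have "\<dots> \<le> (rq - r)^2 * (4 * s0)"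
    proof (rule mult_left_mono)
      have "(rq + r)^2 \<le> (2 * rq)^2" using r_le r by (intro power_mono) auto
      then show "(rq + r)^2 \<le> 4 * s0" using rr by (simp add: power2_eq_square)
    qed simp
    finally have "Y \<le> 4 * s0 * (rq - r)^2" by (simp add: mult.commute)
    then show ?thesis using b sm r s0
      by (intro divide_right_mono mult_right_mono mult_left_mono) auto
  qed
  also have "\<dots> = (- 2 * b * s0 * (s0 - \<sigma>) / sm) * (rq - r)^2" using sm by (simp add: field_simps)
  finally show ?thesis .
qed


lemma inv_sqrt_bound2:
  fixes B Y r d u v w :: real
  assumes "0 < B" "0 < Y" "0 < r" "0 < d" "d \<le> u" "d \<le> v"
    and w: "w = B * Y * u * v / (2 * r^2)"
  shows "1 / sqrt w \<le> (sqrt (2 / B) / d) * (r / sqrt Y)"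
proof -
  have "1 / sqrt w = sqrt (2 * r^2 / (B * Y * (u * v)))"
    unfolding w by (simp add: real_sqrt_divide mult.assoc)
  also have "\<dots> \<le> sqrt (2 * r^2 / (B * Y * (d * d)))"
    using assms by (intro real_sqrt_le_mono frac_le) (auto intro!: mult_left_mono mult_pos_pos mult_mono)
  also have "2 * r^2 / (B * Y * (d * d)) = (2 / B) / d^2 * (r^2 / Y)"
    by (simp add: field_simps power2_eq_square)
  also have "sqrt ((2 / B) / d^2 * (r^2 / Y)) = (sqrt (2 / B) / d) * (r / sqrt Y)"
    using assms(3,4) by (simp add: real_sqrt_mult real_sqrt_divide)
  finally show ?thesis .
qed

lemma T_lower:
  fixes a b J q E s0 \<sigma> sm hh Ep s1 s2 s3 :: real
  assumes b: "b < 0" and a: "0 < a" and q: "0 < q" "q^2 < a/3" and J: "J = q * (q^2 - a) / b"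
  defines "s0 \<equiv> (q^2 - a) / b" and "\<sigma> \<equiv> -2 * q^2 / b" and "sm \<equiv> (s0 + \<sigma>)/2"
    and "Ep \<equiv> (q^2 - a) * (3 * q^2 + a) / (4 * b)"
  assumes E: "E < Ep"
    and s: "\<sigma> < s1" "s1 < sm" "sm < s2" "s2 < s0" "s0 < s3"
    and rr: "r1 a b J E = sqrt s1" "r2 a b J E = sqrt s2"
    and wfac: "\<forall>r>0. 2 * (E - VJ a b J r) = - b * (r^2 - s1) * (s2 - r^2) * (s3 - r^2) / (2 * r^2)"
    and close: "2 * (sqrt s0 - sqrt s2) \<le> sqrt s0 - sqrt sm"
  shows "T a b J E \<ge> 2 / sqrt (- 2 * b * s0 * (s0 - \<sigma>) / sm) *
            (ln (sqrt s0 - sqrt sm) - ln (2 * (sqrt s0 - sqrt s2)))"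
proof -
  define w where "w r = 2 * (E - VJ a b J r)" for r
  define A where "A = - 2 * b * s0 * (s0 - \<sigma>) / sm"
  define k where "k = 1 / sqrt A"
  define rq where "rq = sqrt s0"
  define rm where "rm = sqrt sm"
  define t where "t = 2 * sqrt s2 - rq"
  have \<sigma>pos: "0 < \<sigma>" using b q unfolding \<sigma>_def by (simp add: divide_pos_neg)
  have spos: "0 < s1" "0 < sm" "0 < s2" "0 < s0" using s \<sigma>pos by auto
  have "0 < s0 * (s0 - \<sigma>)" using spos s by simp
  then have "0 < - 2 * b * s0 * (s0 - \<sigma>)" using b by (simp add: mult_neg_pos mult.assoc)
  then have Apos: "0 < A" unfolding A_def using spos by (intro divide_pos_pos)
  have kpos: "0 < k" using Apos by (simp add: k_def)
  have Tdef: "T a b J E = 2 * integral {sqrt s1..sqrt s2} (\<lambda>r. 1 / sqrt (w r))"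
    unfolding T_def rr w_def ..
  define B where "B = - b"
  have B: "0 < B" using b by (simp add: B_def)
  have wf: "\<forall>r>0. w r = B * (r^2 - s1) * (s2 - r^2) * (s3 - r^2) / (2 * r^2)"
    using wfac unfolding w_def B_def by simp
  have fint: "(\<lambda>r. 1 / sqrt (w r)) integrable_on {sqrt s1..sqrt s2}"
  proof -
    have "(\<lambda>r. (\<lambda>_. 1::real) r / sqrt (w r)) integrable_on {sqrt s1..sqrt s2}"
      by (rule weighted_integrable[of s1 s2 s3 B w]) (use s spos B wf in \<open>auto intro: continuous_intros\<close>)
    then show ?thesis by simp
  qed
  have ord: "sqrt s1 < rm" "rm \<le> t" "t < sqrt s2" "sqrt s2 < rq"
    using s spos close unfolding rm_def t_def rq_def by auto
  have wpos: "0 < w r" if "sqrt s1 < r" "r < sqrt s2" for r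
  proof -
    have r0: "0 < r" using that spos by (smt (verit) real_sqrt_gt_zero)
    have "s1 < r^2" "r^2 < s2" using that r0 spos sqrt_lt_sq[of s1 r] lt_sqrt_sq[of r s2] by auto
    then show ?thesis using wf r0 B s by (auto intro!: divide_pos_pos mult_pos_pos)
  qed
  have fnn: "0 \<le> 1 / sqrt (w r)" if "r \<in> {sqrt s1..sqrt s2}" for r
  proof -
    have r0: "0 < r" using that spos by (smt (verit) atLeastAtMost_iff real_sqrt_gt_zero)
    have "s1 \<le> r^2" "r^2 \<le> s2" using that r0 spos sqrt_le_sq[of s1 r] le_sqrt_sq[of r s2] by auto
    then have "0 \<le> w r" using wf r0 B s by (auto intro!: divide_nonneg_pos mult_nonneg_nonneg)
    then show ?thesis by simp
  qed
  have sub: "{rm..t} \<subseteq> {sqrt s1..sqrt s2}" using ord by auto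
  have "integral {rm..t} (\<lambda>r. 1 / sqrt (w r)) \<le> integral {sqrt s1..sqrt s2} (\<lambda>r. 1 / sqrt (w r))"
    using integral_subset_le[OF sub integrable_on_subinterval[OF fint sub] fint] fnn by blast
  moreover have hasint: "((\<lambda>r. k / (rq - r)) has_integral ((- k * ln (rq - t)) - (- k * ln (rq - rm)))) {rm..t}"
  proof (rule fundamental_theorem_of_calculus)
    show "rm \<le> t" using ord by simp
    fix x assume x: "x \<in> {rm..t}"
    then have "x < rq" using ord by auto
    have "((\<lambda>r. - k * ln (rq - r)) has_real_derivative (k / (rq - x))) (at x)"
      using \<open>x < rq\<close> by (auto intro!: derivative_eq_intros simp: field_simps)
    then show "((\<lambda>r. - k * ln (rq - r)) has_vector_derivative (k / (rq - x))) (at x within {rm..t})"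
      by (simp add: has_real_derivative_iff_has_vector_derivative has_vector_derivative_at_within)
  qed
  moreover have "integral {rm..t} (\<lambda>r. k / (rq - r)) \<le> integral {rm..t} (\<lambda>r. 1 / sqrt (w r))"
  proof (rule integral_le)
    show "(\<lambda>r. k / (rq - r)) integrable_on {rm..t}" using hasint by blast
    show "(\<lambda>r. 1 / sqrt (w r)) integrable_on {rm..t}" by (rule integrable_on_subinterval[OF fint sub])
    fix r assume r: "r \<in> {rm..t}"
    have r1: "sqrt s1 < r" "r < sqrt s2" using r ord by auto
    have r0: "0 < r" using r1 spos by (smt (verit) real_sqrt_gt_zero)
    have "r < rq" using r1 ord by simp
    have "rm \<le> r" using r by simp
    have rsq: "sm \<le> r^2" "r^2 \<le> s0"
      using \<open>r < rq\<close> \<open>rm \<le> r\<close> r0 spos unfolding rm_def rq_def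
      using sqrt_le_sq[of sm r] le_sqrt_sq[of r s0] by auto
    have wp: "0 < w r" using wpos[OF r1] .
    have "w r = (- b * (r^2 - s0)^2 * (r^2 - \<sigma>) - 4 * (Ep - E) * r^2) / (2 * r^2)"
      unfolding w_def using w_P[OF b J, of r E] r0 unfolding s0_def \<sigma>_def Ep_def by simp
    also have "\<dots> \<le> A * (rq - r)^2"
      unfolding A_def using w_upper[OF b _ r0 rsq spos(2), of "Ep - E" \<sigma> rq] E s rq_def by auto
    finally have wle: "w r \<le> A * (rq - r)^2" .
    have "k / (rq - r) = 1 / sqrt (A * (rq - r)^2)"
      using \<open>r < rq\<close> Apos unfolding k_def by (simp add: real_sqrt_mult)
    also have "\<dots> \<le> 1 / sqrt (w r)"
      using wp wle by (intro divide_left_mono) (auto intro: mult_pos_pos)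
    finally show "k / (rq - r) \<le> 1 / sqrt (w r)" .
  qed
  ultimately have "(- k * ln (rq - t)) - (- k * ln (rq - rm)) \<le> integral {sqrt s1..sqrt s2} (\<lambda>r. 1 / sqrt (w r))"
    using integral_unique[OF hasint] by linarith
  moreover have "rq - t = 2 * (sqrt s0 - sqrt s2)" unfolding rq_def t_def by simp
  ultimately show ?thesis unfolding Tdef k_def A_def[symmetric] rq_def rm_def
    by (simp add: algebra_simps)
qed


lemma M_bound:
  fixes a b J q E s0 \<sigma> s1 s2 s3 \<epsilon> :: real
  assumes b: "b < 0"
    and s: "0 < s1" "s1 < s2" "s2 < s0" "s0 < s3"
    and rr: "r1 a b J E = sqrt s1" "r2 a b J E = sqrt s2"
    and wfac: "\<forall>r>0. 2 * (E - VJ a b J r) = - b * (r^2 - s1) * (s2 - r^2) * (s3 - r^2) / (2 * r^2)"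
    and eps: "0 < \<epsilon>" "s0 - s2 \<le> \<epsilon> / 2"
  shows "0 \<le> s0 / 2 * T a b J E - Mt a b J E \<and>
         s0 / 2 * T a b J E - Mt a b J E \<le> \<epsilon> / 2 * T a b J E + s0 * (sqrt (2 / (- b)) / (\<epsilon> / 2)) * sqrt s0"
proof -
  define w where "w r = 2 * (E - VJ a b J r)" for r
  define B where "B = - b"
  have B: "0 < B" using b by (simp add: B_def)
  define C2 where "C2 = sqrt (2 / B) / (\<epsilon> / 2)"
  have C2: "0 < C2" using B eps by (simp add: C2_def)
  define G where "G r = C2 * (r / sqrt (r^2 - s1))" for r
  have wf: "\<forall>r>0. w r = B * (r^2 - s1) * (s2 - r^2) * (s3 - r^2) / (2 * r^2)"
    using wfac unfolding w_def B_def by simp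
  have Tdef: "T a b J E = 2 * integral {sqrt s1..sqrt s2} (\<lambda>r. 1 / sqrt (w r))"
    unfolding T_def rr w_def ..
  have Mdef: "Mt a b J E = integral {sqrt s1..sqrt s2} (\<lambda>r. r^2 / sqrt (w r))"
    unfolding Mt_def rr w_def ..
  have s3': "s2 < s3" using s by simp
  have fint: "(\<lambda>r. 1 / sqrt (w r)) integrable_on {sqrt s1..sqrt s2}"
  proof -
    have "(\<lambda>r. (\<lambda>_. 1::real) r / sqrt (w r)) integrable_on {sqrt s1..sqrt s2}"
      by (rule weighted_integrable[OF s(1,2) s3' B wf]) (intro continuous_intros)
    then show ?thesis by simp
  qed
  have mint: "(\<lambda>r. r^2 / sqrt (w r)) integrable_on {sqrt s1..sqrt s2}"
    by (rule weighted_integrable[OF s(1,2) s3' B wf]) (intro continuous_intros)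
  have dint: "(\<lambda>r. (s0 - r^2) / sqrt (w r)) integrable_on {sqrt s1..sqrt s2}"
    by (rule weighted_integrable[OF s(1,2) s3' B wf]) (intro continuous_intros)
  have Deq: "s0 / 2 * T a b J E - Mt a b J E = integral {sqrt s1..sqrt s2} (\<lambda>r. (s0 - r^2) / sqrt (w r))"
  proof -
    have "integral {sqrt s1..sqrt s2} (\<lambda>r. (s0 - r^2) / sqrt (w r))
        = integral {sqrt s1..sqrt s2} (\<lambda>r. s0 * (1 / sqrt (w r)) - r^2 / sqrt (w r))"
      by (simp add: diff_divide_distrib)
    also have "\<dots> = s0 * integral {sqrt s1..sqrt s2} (\<lambda>r. 1 / sqrt (w r)) - integral {sqrt s1..sqrt s2} (\<lambda>r. r^2 / sqrt (w r))"
    proof -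
      have fint': "(\<lambda>r. s0 * (1 / sqrt (w r))) integrable_on {sqrt s1..sqrt s2}"
        using integrable_on_cmult_left[OF fint, of s0] by simp
      show ?thesis unfolding integral_diff[OF fint' mint] integral_mult_right ..
    qed
    finally show ?thesis unfolding Tdef Mdef by simp
  qed
  have sq1: "sqrt s1 \<le> sqrt s2" using s by simp
  have Ghas: "(G has_integral (C2 * sqrt (sqrt s2 ^ 2 - s1) - C2 * sqrt (sqrt s1 ^ 2 - s1))) {sqrt s1..sqrt s2}"
  proof (rule fundamental_theorem_of_calculus_interior[OF sq1])
    show "continuous_on {sqrt s1..sqrt s2} (\<lambda>r. C2 * sqrt (r^2 - s1))" by (intro continuous_intros)
    fix r assume r: "r \<in> {sqrt s1<..<sqrt s2}"
    have r0: "0 < r" using r s by (smt (verit) greaterThanLessThan_iff real_sqrt_gt_zero)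
    have rs: "s1 < r^2" using r r0 s sqrt_lt_sq[of s1 r] by auto
    have "((\<lambda>r. C2 * sqrt (r^2 - s1)) has_real_derivative (C2 * (inverse (sqrt (r^2 - s1)) / 2 * (2 * r)))) (at r)"
      using rs by (auto intro!: derivative_eq_intros)
    moreover have "C2 * (inverse (sqrt (r^2 - s1)) / 2 * (2 * r)) = G r"
      unfolding G_def by (simp add: field_simps)
    ultimately show "((\<lambda>r. C2 * sqrt (r^2 - s1)) has_vector_derivative G r) (at r)"
      by (simp add: has_real_derivative_iff_has_vector_derivative)
  qed
  have Gint: "integral {sqrt s1..sqrt s2} G = C2 * sqrt (s2 - s1)"
    using integral_unique[OF Ghas] s by simp
  have pt: "0 < r" "s1 \<le> r^2" "r^2 \<le> s2" "0 \<le> w r" "0 \<le> 1 / sqrt (w r)" "0 \<le> G r"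
    if r: "r \<in> {sqrt s1..sqrt s2}" for r
  proof -
    show r0: "0 < r" using r s by (smt (verit) atLeastAtMost_iff real_sqrt_gt_zero)
    show "s1 \<le> r^2" "r^2 \<le> s2" using r r0 s sqrt_le_sq[of s1 r] le_sqrt_sq[of r s2] by auto
    then show "0 \<le> w r" using wf r0 B s by (auto intro!: divide_nonneg_pos mult_nonneg_nonneg)
    then show "0 \<le> 1 / sqrt (w r)" by simp
    show "0 \<le> G r" unfolding G_def using C2 r0 \<open>s1 \<le> r^2\<close> by simp
  qed
  have lower: "0 \<le> integral {sqrt s1..sqrt s2} (\<lambda>r. (s0 - r^2) / sqrt (w r))"
  proof (rule integral_nonneg[OF dint])
    fix r assume r: "r \<in> {sqrt s1..sqrt s2}"
    show "0 \<le> (s0 - r^2) / sqrt (w r)" using pt[OF r] s by simp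
  qed
  have Gi: "G integrable_on {sqrt s1..sqrt s2}" using Ghas by blast
  have fe: "(\<lambda>r. \<epsilon> * (1 / sqrt (w r))) integrable_on {sqrt s1..sqrt s2}"
    using integrable_on_cmult_left[OF fint, of \<epsilon>] by simp
  have Gs: "(\<lambda>r. s0 * G r) integrable_on {sqrt s1..sqrt s2}"
    using integrable_on_cmult_left[OF Gi, of s0] by simp
  have "integral {sqrt s1..sqrt s2} (\<lambda>r. (s0 - r^2) / sqrt (w r))
      \<le> integral {sqrt s1..sqrt s2} (\<lambda>r. \<epsilon> * (1 / sqrt (w r)) + s0 * G r)"
  proof (rule integral_le[OF dint])
    show "(\<lambda>r. \<epsilon> * (1 / sqrt (w r)) + s0 * G r) integrable_on {sqrt s1..sqrt s2}"
      by (rule integrable_add[OF fe Gs])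
    fix r assume r: "r \<in> {sqrt s1..sqrt s2}"
    note p = pt[OF r]
    show "(s0 - r^2) / sqrt (w r) \<le> \<epsilon> * (1 / sqrt (w r)) + s0 * G r"
    proof (cases "s0 - \<epsilon> \<le> r^2")
      case True
      have "(s0 - r^2) / sqrt (w r) = (s0 - r^2) * (1 / sqrt (w r))" by simp
      also have "\<dots> \<le> \<epsilon> * (1 / sqrt (w r))" using True p by (intro mult_right_mono) auto
      finally show ?thesis using p s by (smt (verit) mult_nonneg_nonneg)
    next
      case False
      have fG: "1 / sqrt (w r) \<le> G r"
      proof (cases "r^2 = s1")
        case True
        then have "w r = 0" using wf p by simp
        then show ?thesis using p by simp
      next
        case ne: False
        have "1 / sqrt (w r) \<le> (sqrt (2 / B) / (\<epsilon> / 2)) * (r / sqrt (r^2 - s1))"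
        proof (rule inv_sqrt_bound2[OF B])
          show "0 < r^2 - s1" using p ne by simp
          show "0 < r" "0 < \<epsilon> / 2" using p eps by auto
          show "\<epsilon> / 2 \<le> s2 - r^2" using False eps by simp
          show "\<epsilon> / 2 \<le> s3 - r^2" using False eps s by simp
          show "w r = B * (r^2 - s1) * (s2 - r^2) * (s3 - r^2) / (2 * r^2)" using wf p by simp
        qed
        then show ?thesis unfolding G_def C2_def .
      qed
      have "(s0 - r^2) / sqrt (w r) = (s0 - r^2) * (1 / sqrt (w r))" by simp
      also have "\<dots> \<le> s0 * (1 / sqrt (w r))" using p by (intro mult_right_mono) auto
      also have "\<dots> \<le> s0 * G r" using fG s by (intro mult_left_mono) auto
      finally show ?thesis using p eps by (smt (verit) mult_nonneg_nonneg)
    qed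
  qed
  also have "\<dots> = \<epsilon> * integral {sqrt s1..sqrt s2} (\<lambda>r. 1 / sqrt (w r)) + s0 * (C2 * sqrt (s2 - s1))"
    unfolding integral_add[OF fe Gs] integral_mult_right Gint ..
  also have "\<dots> \<le> \<epsilon> * integral {sqrt s1..sqrt s2} (\<lambda>r. 1 / sqrt (w r)) + s0 * (C2 * sqrt s0)"
    using s C2 by (intro add_left_mono mult_left_mono) auto
  finally have up: "integral {sqrt s1..sqrt s2} (\<lambda>r. (s0 - r^2) / sqrt (w r))
      \<le> \<epsilon> * integral {sqrt s1..sqrt s2} (\<lambda>r. 1 / sqrt (w r)) + s0 * (C2 * sqrt s0)" .
  have e1: "\<epsilon> / 2 * T a b J E = \<epsilon> * integral {sqrt s1..sqrt s2} (\<lambda>r. 1 / sqrt (w r))"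
    by (simp add: Tdef)
  have e2: "s0 * (C2 * sqrt s0) = s0 * (sqrt (2 / (- b)) / (\<epsilon> / 2)) * sqrt s0"
    by (simp add: C2_def B_def)
  show ?thesis using Deq lower up e1 e2 by linarith
qed


lemma perE:
  fixes a b J q E s0 \<sigma> sm hh Ep :: real
  assumes b: "b < 0" and a: "0 < a" and q: "0 < q" "q^2 < a/3" and J: "J = q * (q^2 - a) / b"
  defines s0_def: "s0 \<equiv> (q^2 - a) / b" and \<sigma>_def: "\<sigma> \<equiv> -2 * q^2 / b" and sm_def: "sm \<equiv> (s0 + \<sigma>)/2"
    and hh_def: "hh \<equiv> (s0 - \<sigma>)/2" and Ep_def: "Ep \<equiv> (q^2 - a) * (3 * q^2 + a) / (4 * b)"
  assumes E: "E < Ep" and Esmall: "(Ep - E) * 4 * sm < - b * hh^3"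
  shows "\<exists>s2. sm < s2 \<and> s2 < s0 \<and> (s0 - s2)^2 * (- b * hh) \<le> 4 * (Ep - E) * s0 \<and>
    (2 * (sqrt s0 - sqrt s2) \<le> sqrt s0 - sqrt sm \<longrightarrow>
       T a b J E \<ge> 2 / sqrt (- 2 * b * s0 * (s0 - \<sigma>) / sm) *
            (ln (sqrt s0 - sqrt sm) - ln (2 * (sqrt s0 - sqrt s2)))) \<and>
    (\<forall>\<epsilon>>0. s0 - s2 \<le> \<epsilon> / 2 \<longrightarrow> 0 \<le> s0 / 2 * T a b J E - Mt a b J E \<and>
         s0 / 2 * T a b J E - Mt a b J E \<le> \<epsilon> / 2 * T a b J E + s0 * (sqrt (2 / (- b)) / (\<epsilon> / 2)) * sqrt s0)"
proof -
  obtain s1 s2 s3 where s: "\<sigma> < s1" "s1 < sm" "sm < s2" "s2 < s0" "s0 < s3"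
    and bound: "(s0 - s2)^2 * (- b * hh) \<le> 4 * (Ep - E) * s0"
    and rr: "r1 a b J E = sqrt s1" "r2 a b J E = sqrt s2"
    and wfac: "\<forall>r>0. 2 * (E - VJ a b J r) = - b * (r^2 - s1) * (s2 - r^2) * (s3 - r^2) / (2 * r^2)"
  proof -
    have E': "E < (q^2 - a) * (3 * q^2 + a) / (4 * b)" using E unfolding Ep_def .
    have Es': "((q^2 - a) * (3 * q^2 + a) / (4 * b) - E) * 4 * (((q^2 - a) / b + -2 * q^2 / b)/2)
       < - b * (((q^2 - a) / b - -2 * q^2 / b)/2)^3"
      using Esmall unfolding Ep_def sm_def hh_def s0_def \<sigma>_def .
    show ?thesis using roots_structure[OF b a q J E' Es'] that
      unfolding Ep_def sm_def hh_def s0_def \<sigma>_def by blast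
  qed
  have \<sigma>pos: "0 < \<sigma>" using b q unfolding \<sigma>_def by (simp add: divide_pos_neg)
  have s1pos: "0 < s1" using s \<sigma>pos by simp
  have lowT: "2 * (sqrt s0 - sqrt s2) \<le> sqrt s0 - sqrt sm \<longrightarrow>
       T a b J E \<ge> 2 / sqrt (- 2 * b * s0 * (s0 - \<sigma>) / sm) *
            (ln (sqrt s0 - sqrt sm) - ln (2 * (sqrt s0 - sqrt s2)))"
    using T_lower[OF b a q J, of E s1 s2 s3] E s rr wfac
    unfolding Ep_def sm_def hh_def s0_def \<sigma>_def by blast
  have Mb: "\<forall>\<epsilon>>0. s0 - s2 \<le> \<epsilon> / 2 \<longrightarrow> 0 \<le> s0 / 2 * T a b J E - Mt a b J E \<and>
         s0 / 2 * T a b J E - Mt a b J E \<le> \<epsilon> / 2 * T a b J E + s0 * (sqrt (2 / (- b)) / (\<epsilon> / 2)) * sqrt s0"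
    using M_bound[OF b s1pos _ s(4,5) rr wfac] s by auto
  show ?thesis using s bound lowT Mb by blast
qed


lemma gap_bound:
  fixes s0 s2 \<kappa> \<delta> :: real
  assumes "0 < s2" "s2 < s0" "0 < \<kappa>" "0 \<le> \<delta>" "(s0 - s2)^2 \<le> \<kappa> * \<delta>"
  shows "s0 - s2 \<le> sqrt (\<kappa> * \<delta>)" "sqrt s0 - sqrt s2 \<le> sqrt (\<kappa> * \<delta>) / sqrt s0"
proof -
  have sp: "0 < sqrt s0" "0 < sqrt s2" using assms by auto
  show g: "s0 - s2 \<le> sqrt (\<kappa> * \<delta>)" using assms by (simp add: real_le_rsqrt)
  have "sqrt s0 - sqrt s2 = (s0 - s2) / (sqrt s0 + sqrt s2)"
  proof -
    have p: "0 < sqrt s0 + sqrt s2" using assms by (intro add_pos_pos) auto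
    have "(sqrt s0 - sqrt s2) * (sqrt s0 + sqrt s2) = s0 - s2"
      using assms by (simp add: algebra_simps)
    then show ?thesis using p by (simp add: field_simps)
  qed
  also have "\<dots> \<le> (s0 - s2) / sqrt s0"
    by (intro divide_left_mono mult_pos_pos add_pos_pos) (use sp assms in auto)
  also have "\<dots> \<le> sqrt (\<kappa> * \<delta>) / sqrt s0"
    using assms g sp by (intro divide_right_mono) auto
  finally show "sqrt s0 - sqrt s2 \<le> sqrt (\<kappa> * \<delta>) / sqrt s0" .
qed


theorem proposition3:
  fixes a b J E q :: real
  assumes "b < 0" and "0 < a"
    and "(J, E) \<in> D1 a b"
    and "0 < q" and "q < sqrt (a / 3)" and "J = q * (q^2 - a) / b"
  shows "filterlim (\<lambda>E. T a b J E) at_top (at (Eplus a b J) within {E. (J, E) \<in> D1 a b}) \<and>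
         filterlim (\<lambda>E. Mt a b J E) at_top (at (Eplus a b J) within {E. (J, E) \<in> D1 a b}) \<and>
         ((\<lambda>E. Mt a b J E / T a b J E) \<longlongrightarrow> (q^2 - a) / (2 * b))
           (at (Eplus a b J) within {E. (J, E) \<in> D1 a b}) \<and>
         filterlim (\<lambda>E. Pt a b J E) at_top (at (Eplus a b J) within {E. (J, E) \<in> D1 a b}) \<and>
         ((\<lambda>E. Pt a b J E / T a b J E) \<longlongrightarrow> q * (q^2 - a) / (2 * b))
           (at (Eplus a b J) within {E. (J, E) \<in> D1 a b})"
proof -
  note b = assms(1) and a = assms(2) and q = assms(4) and J = assms(6)
  have q2: "q^2 < a/3"
  proof -
    have "q^2 < (sqrt (a/3))^2" using q assms(5) by (intro power_strict_mono) auto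
    then show ?thesis using a by simp
  qed
  define Ep where "Ep = Eplus a b J"
  have EpEq: "Ep = (q^2 - a) * (3 * q^2 + a) / (4 * b)"
    unfolding Ep_def by (rule Eplus_eq[OF b a q q2 J])
  define S where "S = {E. (J, E) \<in> D1 a b}"
  define F where "F = at Ep within S"
  have inS: "E' < Ep" if "E' \<in> S" for E'
    using that unfolding S_def D1_def Ep_def by auto
  define s0 where "s0 = (q^2 - a) / b"
  define \<sigma> where "\<sigma> = -2 * q^2 / b"
  define sm where "sm = (s0 + \<sigma>)/2"
  define hh where "hh = (s0 - \<sigma>)/2"
  have s0pos: "0 < s0" using b q a q2 unfolding s0_def by (simp add: divide_neg_neg)
  have \<sigma>pos: "0 < \<sigma>" using b q unfolding \<sigma>_def by (simp add: divide_pos_neg)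
  have \<sigma>s0: "\<sigma> < s0" using b q2 unfolding \<sigma>_def s0_def by (simp add: field_simps)
  have hh: "0 < hh" using \<sigma>s0 by (simp add: hh_def)
  have smv: "0 < sm" "sm < s0" using \<sigma>s0 \<sigma>pos unfolding sm_def by auto
  define \<delta>0 where "\<delta>0 = - b * hh^3 / (4 * sm)"
  have \<delta>0: "0 < \<delta>0" unfolding \<delta>0_def using b hh smv by (intro divide_pos_pos mult_pos_pos) auto
  define \<kappa> where "\<kappa> = 4 * s0 / (- b * hh)"
  have \<kappa>: "0 < \<kappa>" unfolding \<kappa>_def using b hh s0pos by (intro divide_pos_pos mult_pos_pos) auto
  define rq where "rq = sqrt s0"
  define rm where "rm = sqrt sm"
  have rqm: "0 < rm" "rm < rq" "0 < rq" using smv s0pos unfolding rq_def rm_def by auto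
  define A where "A = - 2 * b * s0 * (s0 - \<sigma>) / sm"
  define kk where "kk = 2 / sqrt A"
  have "0 < s0 * (s0 - \<sigma>)" using s0pos \<sigma>s0 by simp
  then have "0 < - 2 * b * s0 * (s0 - \<sigma>)" using b by (simp add: mult_neg_pos mult.assoc)
  then have Apos: "0 < A" unfolding A_def using smv by (intro divide_pos_pos)
  have kk: "0 < kk" using Apos by (simp add: kk_def)
  have PE: "\<exists>s2. sm < s2 \<and> s2 < s0 \<and> (s0 - s2)^2 \<le> \<kappa> * (Ep - E') \<and>
    (2 * (rq - sqrt s2) \<le> rq - rm \<longrightarrow>
       T a b J E' \<ge> kk * (ln (rq - rm) - ln (2 * (rq - sqrt s2)))) \<and>
    (\<forall>\<epsilon>>0. s0 - s2 \<le> \<epsilon> / 2 \<longrightarrow> 0 \<le> s0 / 2 * T a b J E' - Mt a b J E' \<and>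
         s0 / 2 * T a b J E' - Mt a b J E' \<le> \<epsilon> / 2 * T a b J E' + s0 * (sqrt (2 / (- b)) / (\<epsilon> / 2)) * sqrt s0)"
    if E1: "E' < Ep" and E2: "Ep - E' < \<delta>0" for E'
  proof -
    have E1': "E' < (q^2 - a) * (3 * q^2 + a) / (4 * b)" using E1 EpEq by simp
    have h4: "0 < 4 * sm" using smv by simp
    have "(Ep - E') * (4 * sm) < - b * hh^3"
      using E2 pos_less_divide_eq[OF h4, of "Ep - E'" "- b * hh^3"] unfolding \<delta>0_def by blast
    then have "(Ep - E') * 4 * sm < - b * hh^3" by (simp only: mult.assoc)
    then have E2': "((q^2 - a) * (3 * q^2 + a) / (4 * b) - E') * 4 * (((q^2 - a) / b + -2 * q^2 / b)/2)
       < - b * (((q^2 - a) / b - -2 * q^2 / b)/2)^3"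
      unfolding EpEq sm_def hh_def s0_def \<sigma>_def .
    obtain s2 where s2: "sm < s2" "s2 < s0" and bd: "(s0 - s2)^2 * (- b * hh) \<le> 4 * (Ep - E') * s0"
      and lowT: "2 * (sqrt s0 - sqrt s2) \<le> sqrt s0 - sqrt sm \<longrightarrow>
       T a b J E' \<ge> 2 / sqrt (- 2 * b * s0 * (s0 - \<sigma>) / sm) *
            (ln (sqrt s0 - sqrt sm) - ln (2 * (sqrt s0 - sqrt s2)))"
      and Mb: "\<forall>\<epsilon>>0. s0 - s2 \<le> \<epsilon> / 2 \<longrightarrow> 0 \<le> s0 / 2 * T a b J E' - Mt a b J E' \<and>
         s0 / 2 * T a b J E' - Mt a b J E' \<le> \<epsilon> / 2 * T a b J E' + s0 * (sqrt (2 / (- b)) / (\<epsilon> / 2)) * sqrt s0"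
      using perE[OF b a q q2 J E1' E2'] unfolding EpEq sm_def hh_def s0_def \<sigma>_def by blast
    have "(s0 - s2)^2 \<le> \<kappa> * (Ep - E')"
    proof -
      have "(s0 - s2)^2 \<le> 4 * (Ep - E') * s0 / (- b * hh)"
      proof -
        have hbh: "0 < - b * hh" using b hh by (intro mult_pos_pos) auto
        show ?thesis using bd pos_le_divide_eq[OF hbh, of "(s0 - s2)^2" "4 * (Ep - E') * s0"] by blast
      qed
      then show ?thesis unfolding \<kappa>_def by (simp add: field_simps)
    qed
    then show ?thesis using s2 lowT Mb unfolding rq_def rm_def kk_def A_def by blast
  qed
  have EV: "eventually (\<lambda>E'. 0 < Ep - E' \<and> Ep - E' < \<eta>) F" if "0 < \<eta>" for \<eta>
    unfolding F_def eventually_at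
  proof (intro exI[of _ \<eta>] conjI ballI impI)
    fix x assume "x \<in> S" "x \<noteq> Ep \<and> dist x Ep < \<eta>"
    then show "0 < Ep - x" "Ep - x < \<eta>" using inS[of x] by (auto simp: dist_real_def)
  qed (rule that)
  define \<delta>1 where "\<delta>1 = (rq * (rq - rm) / 2)^2 / \<kappa>"
  have \<delta>1: "0 < \<delta>1" using rqm \<kappa> unfolding \<delta>1_def by simp
  define c0 where "c0 = kk * (ln (rq - rm) - ln (2 * sqrt \<kappa> / rq))"
  have Tlow: "c0 + kk / 2 * (- ln (Ep - E')) \<le> T a b J E'"
    if E': "0 < Ep - E'" "Ep - E' < \<delta>0" "Ep - E' < \<delta>1" for E'
  proof -
    define \<delta> where "\<delta> = Ep - E'"
    have \<delta>: "0 < \<delta>" "\<delta> < \<delta>1" using E' by (auto simp: \<delta>_def)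
    obtain s2 where s2: "sm < s2" "s2 < s0" "(s0 - s2)^2 \<le> \<kappa> * \<delta>"
      and lowT: "2 * (rq - sqrt s2) \<le> rq - rm \<longrightarrow>
       T a b J E' \<ge> kk * (ln (rq - rm) - ln (2 * (rq - sqrt s2)))"
      using PE[of E'] E' unfolding \<delta>_def by auto
    have s2p: "0 < s2" using s2 smv by simp
    have gap: "rq - sqrt s2 \<le> sqrt (\<kappa> * \<delta>) / rq"
      using gap_bound(2)[OF s2p s2(2) \<kappa> _ s2(3)] \<delta> unfolding rq_def by simp
    have gpos: "0 < rq - sqrt s2" using s2 unfolding rq_def by simp
    have "sqrt (\<kappa> * \<delta>) \<le> sqrt (\<kappa> * \<delta>1)" using \<delta> \<kappa> by simp
    also have "sqrt (\<kappa> * \<delta>1) = rq * (rq - rm) / 2"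
      unfolding \<delta>1_def using \<kappa> rqm by simp
    finally have "sqrt (\<kappa> * \<delta>) / rq \<le> (rq - rm) / 2" using rqm by (simp add: divide_le_eq mult.commute)
    then have "rq - sqrt s2 \<le> (rq - rm) / 2" using gap by (rule order_trans[rotated])
    then have close: "2 * (rq - sqrt s2) \<le> rq - rm" by (simp add: field_simps)
    have "ln (2 * (rq - sqrt s2)) \<le> ln (2 * (sqrt (\<kappa> * \<delta>) / rq))"
      using gap gpos by simp
    also have "2 * (sqrt (\<kappa> * \<delta>) / rq) = (2 * sqrt \<kappa> / rq) * sqrt \<delta>"
      by (simp add: real_sqrt_mult)
    also have "ln ((2 * sqrt \<kappa> / rq) * sqrt \<delta>) = ln (2 * sqrt \<kappa> / rq) + ln \<delta> / 2"
    proof -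
      have X: "0 < 2 * sqrt \<kappa> / rq" using \<kappa> rqm by simp
      have "ln ((2 * sqrt \<kappa> / rq) * sqrt \<delta>) = ln (2 * sqrt \<kappa> / rq) + ln (sqrt \<delta>)"
        using X \<delta> \<kappa> rqm by (simp only: ln_mult) simp
      also have "ln (sqrt \<delta>) = ln \<delta> / 2" using \<delta> by (simp add: ln_sqrt)
      finally show ?thesis .
    qed
    finally have "ln (2 * (rq - sqrt s2)) \<le> ln (2 * sqrt \<kappa> / rq) + ln \<delta> / 2" .
    then have m: "kk * ln (2 * (rq - sqrt s2)) \<le> kk * (ln (2 * sqrt \<kappa> / rq) + ln \<delta> / 2)"
      using kk by (intro mult_left_mono) auto
    have "c0 + kk / 2 * (- ln \<delta>) \<le> kk * (ln (rq - rm) - ln (2 * (rq - sqrt s2)))"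
      using m unfolding c0_def right_diff_distrib distrib_left by simp
    also have "\<dots> \<le> T a b J E'" using lowT close by simp
    finally show ?thesis unfolding \<delta>_def .
  qed
  have Linf: "filterlim (\<lambda>E'. c0 + kk / 2 * (- ln (Ep - E'))) at_top F"
  proof -
    have "((\<lambda>E'. Ep - E') \<longlongrightarrow> 0) F"
      unfolding F_def by (rule tendsto_eq_intros refl | simp)+
    moreover have "eventually (\<lambda>E'. 0 < Ep - E') F" using EV[of 1] by (auto elim: eventually_mono)
    ultimately have "filterlim (\<lambda>E'. Ep - E') (at_right 0) F" by (rule tendsto_imp_filterlim_at_right)
    then have "filterlim (\<lambda>E'. ln (Ep - E')) at_bot F" by (rule filterlim_compose[OF ln_at_0])
    then have "filterlim (\<lambda>E'. - ln (Ep - E')) at_top F"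
      by (rule filterlim_compose[OF filterlim_uminus_at_top_at_bot])
    moreover have "0 < kk / 2" using kk by simp
    ultimately have "filterlim (\<lambda>E'. kk / 2 * (- ln (Ep - E'))) at_top F"
      using filterlim_tendsto_pos_mult_at_top[OF tendsto_const[of "kk / 2"]] by blast
    then show ?thesis using filterlim_tendsto_add_at_top[OF tendsto_const[of c0]] by blast
  qed
  have Tinf: "filterlim (\<lambda>E'. T a b J E') at_top F"
  proof (rule filterlim_at_top_mono[OF Linf])
    show "eventually (\<lambda>E'. c0 + kk / 2 * (- ln (Ep - E')) \<le> T a b J E') F"
    proof -
      have "0 < min \<delta>0 \<delta>1" using \<delta>0 \<delta>1 by simp
      from EV[OF this] show ?thesis
      proof (rule eventually_mono)
        fix x assume "0 < Ep - x \<and> Ep - x < min \<delta>0 \<delta>1"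
        then show "c0 + kk / 2 * (- ln (Ep - x)) \<le> T a b J x" by (intro Tlow) auto
      qed
    qed
  qed
  have ratio: "((\<lambda>E'. Mt a b J E' / T a b J E') \<longlongrightarrow> s0 / 2) F"
  proof (rule tendstoI)
    fix e :: real assume e: "0 < e"
    define B\<epsilon> where "B\<epsilon> = s0 * (sqrt (2 / (- b)) / (e / 2)) * sqrt s0"
    have B\<epsilon>: "0 \<le> B\<epsilon>" unfolding B\<epsilon>_def using s0pos e b by simp
    define \<delta>2 where "\<delta>2 = (e / 2)^2 / \<kappa>"
    have \<delta>2: "0 < \<delta>2" unfolding \<delta>2_def using e \<kappa> by simp
    have ev1: "eventually (\<lambda>E'. 0 < Ep - E' \<and> Ep - E' < min \<delta>0 \<delta>2) F"
      using EV[of "min \<delta>0 \<delta>2"] \<delta>0 \<delta>2 by simp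
    have ev2: "eventually (\<lambda>E'. 2 * B\<epsilon> / e + 1 \<le> T a b J E') F"
      using Tinf unfolding filterlim_at_top by blast
    show "eventually (\<lambda>E'. dist (Mt a b J E' / T a b J E') (s0 / 2) < e) F"
      using ev1 ev2
    proof eventually_elim
      case (elim E')
      define \<delta> where "\<delta> = Ep - E'"
      have \<delta>: "0 < \<delta>" "\<delta> < \<delta>0" "\<delta> < \<delta>2" using elim by (auto simp: \<delta>_def)
      obtain s2 where s2: "sm < s2" "s2 < s0" "(s0 - s2)^2 \<le> \<kappa> * \<delta>"
        and Mb: "\<forall>\<epsilon>>0. s0 - s2 \<le> \<epsilon> / 2 \<longrightarrow> 0 \<le> s0 / 2 * T a b J E' - Mt a b J E' \<and>
         s0 / 2 * T a b J E' - Mt a b J E' \<le> \<epsilon> / 2 * T a b J E' + s0 * (sqrt (2 / (- b)) / (\<epsilon> / 2)) * sqrt s0"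
        using PE[of E'] \<delta> unfolding \<delta>_def by auto
      have s2p: "0 < s2" using s2 smv by simp
      have "s0 - s2 \<le> sqrt (\<kappa> * \<delta>)" using gap_bound(1)[OF s2p s2(2) \<kappa> _ s2(3)] \<delta> by simp
      also have "\<dots> \<le> sqrt (\<kappa> * \<delta>2)" using \<delta> \<kappa> by simp
      also have "sqrt (\<kappa> * \<delta>2) = e / 2" unfolding \<delta>2_def using \<kappa> e by simp
      finally have "s0 - s2 \<le> e / 2" .
      then have D: "0 \<le> s0 / 2 * T a b J E' - Mt a b J E'"
        "s0 / 2 * T a b J E' - Mt a b J E' \<le> e / 2 * T a b J E' + B\<epsilon>"
        using Mb e unfolding B\<epsilon>_def by auto
      define TT where "TT = T a b J E'"
      have TT: "2 * B\<epsilon> / e + 1 \<le> TT" using elim by (simp add: TT_def)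
      have TTpos: "0 < TT" using TT B\<epsilon> e by (smt (verit) divide_nonneg_pos)
      have "B\<epsilon> < e / 2 * TT"
      proof -
        have "2 * B\<epsilon> / e < TT" using TT by simp
        then show ?thesis using e by (simp add: divide_less_eq mult.commute)
      qed
      then have D2: "s0 / 2 * TT - Mt a b J E' < e * TT" using D unfolding TT_def by linarith
      have "dist (Mt a b J E' / TT) (s0 / 2) = (s0 / 2 * TT - Mt a b J E') / TT"
        using TTpos D(1) unfolding TT_def[symmetric] dist_real_def
        by (simp add: field_simps abs_if)
      also have "\<dots> < e" using D2 TTpos by (simp add: divide_less_eq)
      finally show ?case unfolding TT_def .
    qed
  qed
  have s0half: "s0 / 2 = (q^2 - a) / (2 * b)" unfolding s0_def by simp
  have Tev: "eventually (\<lambda>E'. T a b J E' \<noteq> 0) F"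
  proof -
    have "eventually (\<lambda>x. 1 \<le> T a b J x) F" using Tinf unfolding filterlim_at_top by blast
    then show ?thesis by (rule eventually_mono) auto
  qed
  have Minf: "filterlim (\<lambda>E'. Mt a b J E') at_top F"
  proof -
    have "0 < s0 / 2" using s0pos by simp
    then have l: "filterlim (\<lambda>E'. Mt a b J E' / T a b J E' * T a b J E') at_top F"
      using filterlim_tendsto_pos_mult_at_top[OF ratio _ Tinf] by blast
    have e: "eventually (\<lambda>E'. Mt a b J E' / T a b J E' * T a b J E' = Mt a b J E') F"
      using Tev by (rule eventually_mono) simp
    show ?thesis using l unfolding filterlim_cong[OF refl refl e] .
  qed
  have Jpos: "0 < J"
  proof -
    have "q^2 - a < 0" using q2 a by simp
    then have "q * (q^2 - a) < 0" using q by (simp add: mult_pos_neg)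
    then show ?thesis unfolding J using b by (simp add: divide_neg_neg)
  qed
  have Pinf: "filterlim (\<lambda>E'. Pt a b J E') at_top F"
  proof -
    have "0 < J / 2" using Jpos by simp
    then have "filterlim (\<lambda>E'. J / 2 * T a b J E') at_top F"
      using filterlim_tendsto_pos_mult_at_top[OF tendsto_const[of "J / 2"] _ Tinf] by blast
    moreover have "(\<lambda>E'. J / 2 * T a b J E') = (\<lambda>E'. Pt a b J E')"
      unfolding Pt_def by (rule ext) simp
    ultimately show ?thesis by simp
  qed
  have Pratio: "((\<lambda>E'. Pt a b J E' / T a b J E') \<longlongrightarrow> q * (q^2 - a) / (2 * b)) F"
  proof -
    have "eventually (\<lambda>E'. q * (q^2 - a) / (2 * b) = Pt a b J E' / T a b J E') F"
      using Tev
    proof (rule eventually_mono)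
      fix x assume "T a b J x \<noteq> 0"
      then have "Pt a b J x / T a b J x = J / 2" unfolding Pt_def by simp
      moreover have "J / 2 = q * (q^2 - a) / (2 * b)" unfolding J by simp
      ultimately show "q * (q^2 - a) / (2 * b) = Pt a b J x / T a b J x" by simp
    qed
    note ev = this
    have c: "((\<lambda>E'. q * (q^2 - a) / (2 * b)) \<longlongrightarrow> q * (q^2 - a) / (2 * b)) F"
      by (rule tendsto_const)
    show ?thesis using c unfolding tendsto_cong[OF ev] .
  qed
  show ?thesis using Tinf Minf ratio Pinf Pratio unfolding F_def S_def Ep_def s0half by blast
qed


end
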